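(* Let $n\ge1$ and $k\ge1$ be integers. (i) If $k=1$, then $f_n(\{n-k\})=2^{n-1}$ and $f_n(\{k\})=2^{n-1}$. (ii) If $k>1$ and $n\le k+1$, then $f_n(\{n-k\})=2^{n-1}$ and $f_n(\{k\})=2^{n-1}$. (iii) If $k>1$ and $n>k+1$, then $f_n(\{n-k\})=5\cdot2^{n-3}-2^{n-k-2}$ and $f_n(\{k\})=5\cdot2^{n-3}-2^{k-2}$.
   Context: For $m\ge1$ and a set $B$ of integers, $f_m(B)$ denotes the number of linear orders $q$ on $[m]$ such that for every triple $i<j<k$ in $[m]$: if $j\in B$ then $i$ is not ranked last among $\{i,j,k\}$ in $q$, and if $j\notin B$ then $k$ is not ranked first among $\{i,j,k\}$ in $q$ (only elements of $B\cap\{2,\dots,m-1\}$ matter). *)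

theory Defs
  imports Main
begin

text \<open>A linear order q on [m] = {1..m} is a relation r with linear_order_on;
 (x,y) \<in> r means x is ranked (weakly) before y.\<close>

definition ranked_last :: "nat rel \<Rightarrow> nat \<Rightarrow> nat \<Rightarrow> nat \<Rightarrow> bool" where
  "ranked_last r x y z \<longleftrightarrow> (y, x) \<in> r \<and> (z, x) \<in> r"

definition ranked_first :: "nat rel \<Rightarrow> nat \<Rightarrow> nat \<Rightarrow> nat \<Rightarrow> bool" where
  "ranked_first r x y z \<longleftrightarrow> (x, y) \<in> r \<and> (x, z) \<in> r"

definition f :: "nat \<Rightarrow> int set \<Rightarrow> nat" where
  "f m B = card {r. r \<subseteq> {1..m} \<times> {1..m} \<and> linear_order_on {1..m} r \<and>
     (\<forall>i j k. 1 \<le> i \<and> i < j \<and> j < k \<and> k \<le> m \<longrightarrow>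
        (int j \<in> B \<longrightarrow> \<not> ranked_last r i j k) \<and>
        (int j \<notin> B \<longrightarrow> \<not> ranked_first r k i j))}"

end

theory Submission
  imports Defs
begin

definition LO :: "nat \<Rightarrow> nat rel set" where
  "LO m = {r. r \<subseteq> {1..m} \<times> {1..m} \<and> linear_order_on {1..m} r}"

lemma LO_iff: "r \<in> LO m \<longleftrightarrow> r \<subseteq> {1..m} \<times> {1..m} \<and> (\<forall>x\<in>{1..m}. (x,x) \<in> r)
  \<and> (\<forall>x y z. (x,y) \<in> r \<longrightarrow> (y,z) \<in> r \<longrightarrow> (x,z) \<in> r)
  \<and> (\<forall>x y. (x,y) \<in> r \<longrightarrow> (y,x) \<in> r \<longrightarrow> x = y)
  \<and> (\<forall>x\<in>{1..m}. \<forall>y\<in>{1..m}. x \<noteq> y \<longrightarrow> (x,y) \<in> r \<or> (y,x) \<in> r)"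
proof -
  have "trans r \<longleftrightarrow> (\<forall>x y z. (x,y) \<in> r \<longrightarrow> (y,z) \<in> r \<longrightarrow> (x,z) \<in> r)"
    unfolding trans_def by blast
  then show ?thesis
    unfolding LO_def linear_order_on_def partial_order_on_def preorder_on_def refl_on_def
     antisym_def total_on_def mem_Collect_eq by simp
qed

lemma LO_D: assumes "r \<in> LO m" shows "r \<subseteq> {1..m} \<times> {1..m}" "\<forall>x\<in>{1..m}. (x,x) \<in> r"
  "\<forall>x y z. (x,y) \<in> r \<longrightarrow> (y,z) \<in> r \<longrightarrow> (x,z) \<in> r"
  "\<forall>x y. (x,y) \<in> r \<longrightarrow> (y,x) \<in> r \<longrightarrow> x = y"
  "\<forall>x\<in>{1..m}. \<forall>y\<in>{1..m}. x \<noteq> y \<longrightarrow> (x,y) \<in> r \<or> (y,x) \<in> r"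
  using assms unfolding LO_iff by blast+
lemma LO_sub: "r \<in> LO m \<Longrightarrow> (x,y) \<in> r \<Longrightarrow> x \<in> {1..m} \<and> y \<in> {1..m}"
  using LO_D(1) by blast
lemma LO_refl: "r \<in> LO m \<Longrightarrow> x \<in> {1..m} \<Longrightarrow> (x,x) \<in> r"
  using LO_D(2) by blast
lemma LO_trans: "r \<in> LO m \<Longrightarrow> (x,y) \<in> r \<Longrightarrow> (y,z) \<in> r \<Longrightarrow> (x,z) \<in> r"
  using LO_D(3) by blast
lemma LO_antisym: "r \<in> LO m \<Longrightarrow> (x,y) \<in> r \<Longrightarrow> (y,x) \<in> r \<Longrightarrow> x = y"
  using LO_D(4) by blast
lemma LO_total: "r \<in> LO m \<Longrightarrow> x \<in> {1..m} \<Longrightarrow> y \<in> {1..m} \<Longrightarrow> (x,y) \<in> r \<or> (y,x) \<in> r"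
  using LO_D(5) LO_D(2) by metis
lemma LO_I: assumes "r \<subseteq> {1..m} \<times> {1..m}" "(\<And>x. x\<in>{1..m} \<Longrightarrow> (x,x) \<in> r)"
  "(\<And>x y z. (x,y) \<in> r \<Longrightarrow> (y,z) \<in> r \<Longrightarrow> (x,z) \<in> r)"
  "(\<And>x y. (x,y) \<in> r \<Longrightarrow> (y,x) \<in> r \<Longrightarrow> x = y)"
  "(\<And>x y. x\<in>{1..m} \<Longrightarrow> y\<in>{1..m} \<Longrightarrow> (x,y) \<in> r \<or> (y,x) \<in> r)" shows "r \<in> LO m"
  unfolding LO_iff
proof (intro conjI)
qed (use assms in blast)+
definition good :: "nat \<Rightarrow> (nat \<Rightarrow> bool) \<Rightarrow> nat rel \<Rightarrow> bool" where
  "good m P r \<longleftrightarrow> (\<forall>i j k. 1 \<le> i \<and> i < j \<and> j < k \<and> k \<le> m \<longrightarrow>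
        (P j \<longrightarrow> \<not> ((j,i) \<in> r \<and> (k,i) \<in> r)) \<and> (\<not> P j \<longrightarrow> \<not> ((k,i) \<in> r \<and> (k,j) \<in> r)))"

definition V :: "nat \<Rightarrow> (nat \<Rightarrow> bool) \<Rightarrow> nat rel set" where
  "V m P = {r \<in> LO m. good m P r}"

lemma f_V: "f m B = card (V m (\<lambda>j. int j \<in> B))"
  unfolding f_def V_def LO_def good_def ranked_last_def ranked_first_def
  by (simp add: conj_assoc)

definition ins :: "nat \<Rightarrow> nat rel \<Rightarrow> nat set \<Rightarrow> nat rel" where
  "ins n r S = r \<union> (({1..n} - S) \<times> {Suc n}) \<union> ({Suc n} \<times> S) \<union> {(Suc n, Suc n)}"

definition res :: "nat \<Rightarrow> nat rel \<Rightarrow> nat rel" where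
  "res n r = r \<inter> ({1..n} \<times> {1..n})"

definition up :: "nat \<Rightarrow> nat rel \<Rightarrow> nat set" where
  "up n r = {x \<in> {1..n}. (Suc n, x) \<in> r}"

definition final :: "nat \<Rightarrow> nat rel \<Rightarrow> nat set \<Rightarrow> bool" where
  "final n r S \<longleftrightarrow> S \<subseteq> {1..n} \<and> (\<forall>x y. x \<in> S \<longrightarrow> (x,y) \<in> r \<longrightarrow> y \<in> S)"

definition adm :: "nat \<Rightarrow> (nat \<Rightarrow> bool) \<Rightarrow> nat rel \<Rightarrow> nat set \<Rightarrow> bool" where
  "adm n P r S \<longleftrightarrow> final n r S
     \<and> (\<forall>i j. 1 \<le> i \<and> i < j \<and> j \<le> n \<and> \<not> P j \<longrightarrow> \<not> (i \<in> S \<and> j \<in> S))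
     \<and> (\<forall>i j. 1 \<le> i \<and> i < j \<and> j \<le> n \<and> P j \<longrightarrow> \<not> (i \<in> S \<and> (j,i) \<in> r))"

lemma LO_res: assumes "r \<in> LO (Suc n)" shows "res n r \<in> LO n"
proof (rule LO_I)
  show "res n r \<subseteq> {1..n} \<times> {1..n}" unfolding res_def by blast
  show "(x,x) \<in> res n r" if "x \<in> {1..n}" for x using LO_refl[OF assms, of x] that unfolding res_def by auto
  show "(x,z) \<in> res n r" if "(x,y) \<in> res n r" "(y,z) \<in> res n r" for x y z
    using LO_trans[OF assms, of x y z] that unfolding res_def by auto
  show "x = y" if "(x,y) \<in> res n r" "(y,x) \<in> res n r" for x y
    using LO_antisym[OF assms, of x y] that unfolding res_def by auto
  show "(x,y) \<in> res n r \<or> (y,x) \<in> res n r" if "x \<in> {1..n}" "y \<in> {1..n}" for x y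
    using LO_total[OF assms, of x y] that unfolding res_def by auto
qed

lemma up_final: assumes "r \<in> LO (Suc n)" shows "final n (res n r) (up n r)"
  unfolding final_def
proof (intro conjI allI impI)
  show "up n r \<subseteq> {1..n}" unfolding up_def by blast
  fix x y assume "x \<in> up n r" "(x,y) \<in> res n r"
  then show "y \<in> up n r" using LO_trans[OF assms, of "Suc n" x y] unfolding up_def res_def by auto
qed

lemma mem_ins: "(x,y) \<in> ins n r S \<longleftrightarrow> (x,y) \<in> r \<or> (x \<in> {1..n} \<and> x \<notin> S \<and> y = Suc n) \<or> (x = Suc n \<and> y \<in> S) \<or> (x = Suc n \<and> y = Suc n)"
  unfolding ins_def by blast

lemma ins_res: assumes "r \<in> LO (Suc n)" shows "ins n (res n r) (up n r) = r"
proof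
  show "ins n (res n r) (up n r) \<subseteq> r"
  proof (rule subrelI)
    fix x y assume "(x,y) \<in> ins n (res n r) (up n r)"
    then have "(x,y) \<in> res n r \<or> (x \<in> {1..n} \<and> x \<notin> up n r \<and> y = Suc n) \<or> (x = Suc n \<and> y \<in> up n r) \<or> (x = Suc n \<and> y = Suc n)"
      by (simp only: mem_ins)
    then show "(x,y) \<in> r"
    proof (elim disjE)
      assume "x \<in> {1..n} \<and> x \<notin> up n r \<and> y = Suc n"
      then show ?thesis using LO_total[OF assms, of x "Suc n"] unfolding up_def by auto
    next
      assume "x = Suc n \<and> y = Suc n" then show ?thesis using LO_refl[OF assms, of "Suc n"] by auto
    qed (auto simp: res_def up_def)
  qed
next
  show "r \<subseteq> ins n (res n r) (up n r)"
  proof (rule subrelI)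
    fix x y assume p: "(x,y) \<in> r"
    have xr: "x \<in> {1..Suc n}" "y \<in> {1..Suc n}" using p LO_sub[OF assms] by auto
    show "(x,y) \<in> ins n (res n r) (up n r)" 
    proof (cases "x = Suc n")
      case True
      then show ?thesis using p xr unfolding res_def up_def mem_ins by auto
    next
      case False
      show ?thesis
      proof (cases "y = Suc n")
        case True
        have "(Suc n, x) \<notin> r" using LO_antisym[OF assms, of x "Suc n"] p False True by blast
        then show ?thesis using p xr False True unfolding res_def up_def mem_ins by auto
      next
        case False2: False
        then show ?thesis using p xr False unfolding res_def up_def mem_ins by auto
      qed
    qed
  qed
qed

lemma ins_LO: assumes r: "r \<in> LO n" and S: "final n r S" shows "ins n r S \<in> LO (Suc n)"
proof (rule LO_I)
  have Ss: "S \<subseteq> {1..n}" using S unfolding final_def by blast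
  have Sc: "\<And>x y. x \<in> S \<Longrightarrow> (x,y) \<in> r \<Longrightarrow> y \<in> S" using S unfolding final_def by blast
  note rs = LO_sub[OF r]
  show "ins n r S \<subseteq> {1..Suc n} \<times> {1..Suc n}"
  proof (rule subrelI)
    fix x y assume "(x,y) \<in> ins n r S"
    then show "(x,y) \<in> {1..Suc n} \<times> {1..Suc n}" unfolding mem_ins using rs[of x y] Ss by auto
  qed
  show "(x,x) \<in> ins n r S" if "x \<in> {1..Suc n}" for x
    using that LO_refl[OF r, of x] unfolding mem_ins by (cases "x = Suc n") auto
  show "(x,y) \<in> ins n r S \<or> (y,x) \<in> ins n r S" if "x \<in> {1..Suc n}" "y \<in> {1..Suc n}" for x y
  proof (cases "x = Suc n \<or> y = Suc n")
    case True then show ?thesis using that unfolding mem_ins by auto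
  next
    case False then show ?thesis using that LO_total[OF r, of x y] unfolding mem_ins by auto
  qed
  show "x = y" if a: "(x,y) \<in> ins n r S" "(y,x) \<in> ins n r S" for x y
  proof -
    have A: "(x,y) \<in> r \<or> (x \<in> {1..n} \<and> x \<notin> S \<and> y = Suc n) \<or> (x = Suc n \<and> y \<in> S) \<or> (x = Suc n \<and> y = Suc n)"
      using a(1) unfolding mem_ins .
    have B: "(y,x) \<in> r \<or> (y \<in> {1..n} \<and> y \<notin> S \<and> x = Suc n) \<or> (y = Suc n \<and> x \<in> S) \<or> (y = Suc n \<and> x = Suc n)"
      using a(2) unfolding mem_ins .
    show ?thesis using A B rs[of x y] rs[of y x] Ss LO_antisym[OF r, of x y] by auto
  qed
  show "(x,z) \<in> ins n r S" if a: "(x,y) \<in> ins n r S" "(y,z) \<in> ins n r S" for x y z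
  proof -
    have A: "(x,y) \<in> r \<or> (x \<in> {1..n} \<and> x \<notin> S \<and> y = Suc n) \<or> (x = Suc n \<and> y \<in> S) \<or> (x = Suc n \<and> y = Suc n)"
      using a(1) unfolding mem_ins .
    have B: "(y,z) \<in> r \<or> (y \<in> {1..n} \<and> y \<notin> S \<and> z = Suc n) \<or> (y = Suc n \<and> z \<in> S) \<or> (y = Suc n \<and> z = Suc n)"
      using a(2) unfolding mem_ins .
    have "(x,z) \<in> r \<or> (x \<in> {1..n} \<and> x \<notin> S \<and> z = Suc n) \<or> (x = Suc n \<and> z \<in> S) \<or> (x = Suc n \<and> z = Suc n)"
      using A
    proof (elim disjE)
      assume xy: "(x,y) \<in> r"
      then have "x \<in> {1..n}" "y \<in> {1..n}" using rs by auto
      then show ?thesis using B xy LO_trans[OF r, of x y z] Sc[of x y] by auto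
    next
      assume xy: "x \<in> {1..n} \<and> x \<notin> S \<and> y = Suc n"
      then show ?thesis using B subsetD[OF Ss, of z] rs[of y z] LO_total[OF r, of x z] Sc[of z x] by auto
    next
      assume xy: "x = Suc n \<and> y \<in> S"
      then show ?thesis using B Sc[of y z] Ss by auto
    next
      assume xy: "x = Suc n \<and> y = Suc n"
      then show ?thesis using B rs[of y z] by auto
    qed
    then show ?thesis unfolding mem_ins .
  qed
qed

lemma res_ins: assumes "r \<in> LO n" shows "res n (ins n r S) = r"
proof
  show "res n (ins n r S) \<subseteq> r" unfolding res_def by (auto simp: mem_ins)
  show "r \<subseteq> res n (ins n r S)"
  proof (rule subrelI)
    fix x y assume "(x,y) \<in> r" then show "(x,y) \<in> res n (ins n r S)"
      unfolding res_def using LO_sub[OF assms, of x y] by (auto simp: mem_ins)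
  qed
qed

lemma up_ins: assumes "r \<in> LO n" "S \<subseteq> {1..n}" shows "up n (ins n r S) = S"
proof -
  have "(Suc n, x) \<notin> r" for x using LO_sub[OF assms(1), of "Suc n" x] by auto
  then show ?thesis unfolding up_def using assms(2) by (auto simp: mem_ins)
qed

lemma good_ins:
  assumes r: "r \<in> LO n" and F: "final n r S"
  shows "good (Suc n) P (ins n r S) \<longleftrightarrow> good n P r \<and> adm n P r S"
proof -
  have e1: "(x,y) \<in> ins n r S \<longleftrightarrow> (x,y) \<in> r" if "x \<le> n" "y \<le> n" for x y
    using that unfolding mem_ins by auto
  have e2: "(Suc n, i) \<in> ins n r S \<longleftrightarrow> i \<in> S \<or> i = Suc n" for i
    using LO_sub[OF r, of "Suc n" i] unfolding mem_ins by auto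
  have "good (Suc n) P (ins n r S) \<longleftrightarrow> good n P r \<and>
     (\<forall>i j. 1 \<le> i \<and> i < j \<and> j \<le> n \<and> \<not> P j \<longrightarrow> \<not> (i \<in> S \<and> j \<in> S)) \<and>
     (\<forall>i j. 1 \<le> i \<and> i < j \<and> j \<le> n \<and> P j \<longrightarrow> \<not> (i \<in> S \<and> (j,i) \<in> r))"
  proof (intro iffI conjI allI impI)
    assume G: "good (Suc n) P (ins n r S)"
    show "good n P r" unfolding good_def
    proof (intro allI impI)
      fix i j k assume a: "1 \<le> i \<and> i < j \<and> j < k \<and> k \<le> n"
      then have "(P j \<longrightarrow> \<not> ((j,i) \<in> ins n r S \<and> (k,i) \<in> ins n r S)) \<and> (\<not> P j \<longrightarrow> \<not> ((k,i) \<in> ins n r S \<and> (k,j) \<in> ins n r S))"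
        using G unfolding good_def by auto
      then show "(P j \<longrightarrow> \<not> ((j,i) \<in> r \<and> (k,i) \<in> r)) \<and> (\<not> P j \<longrightarrow> \<not> ((k,i) \<in> r \<and> (k,j) \<in> r))"
        using a e1 by auto
    qed
    fix i j
    { assume a: "1 \<le> i \<and> i < j \<and> j \<le> n \<and> \<not> P j"
      then have "\<not> ((Suc n,i) \<in> ins n r S \<and> (Suc n,j) \<in> ins n r S)"
        using G[unfolded good_def, rule_format, of i j "Suc n"] by auto
      then show "\<not> (i \<in> S \<and> j \<in> S)" using e2 by auto }
    { assume a: "1 \<le> i \<and> i < j \<and> j \<le> n \<and> P j"
      then have "\<not> ((j,i) \<in> ins n r S \<and> (Suc n,i) \<in> ins n r S)"
        using G[unfolded good_def, rule_format, of i j "Suc n"] by auto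
      then show "\<not> (i \<in> S \<and> (j,i) \<in> r)" using e2 e1[of j i] a by auto }
  next
    assume H: "good n P r \<and>
     (\<forall>i j. 1 \<le> i \<and> i < j \<and> j \<le> n \<and> \<not> P j \<longrightarrow> \<not> (i \<in> S \<and> j \<in> S)) \<and>
     (\<forall>i j. 1 \<le> i \<and> i < j \<and> j \<le> n \<and> P j \<longrightarrow> \<not> (i \<in> S \<and> (j,i) \<in> r))"
    show "good (Suc n) P (ins n r S)" unfolding good_def
    proof (intro allI impI)
      fix i j k assume a: "1 \<le> i \<and> i < j \<and> j < k \<and> k \<le> Suc n"
      show "(P j \<longrightarrow> \<not> ((j,i) \<in> ins n r S \<and> (k,i) \<in> ins n r S)) \<and> (\<not> P j \<longrightarrow> \<not> ((k,i) \<in> ins n r S \<and> (k,j) \<in> ins n r S))"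
      proof (cases "k = Suc n")
        case True
        then show ?thesis using H a e2 e1[of j i] by auto
      next
        case False
        then have "k \<le> n" using a by auto
        then have "(P j \<longrightarrow> \<not> ((j,i) \<in> r \<and> (k,i) \<in> r)) \<and> (\<not> P j \<longrightarrow> \<not> ((k,i) \<in> r \<and> (k,j) \<in> r))"
          using H a unfolding good_def by auto
        then show ?thesis using e1 a \<open>k \<le> n\<close> by auto
      qed
    qed
  qed
  then show ?thesis unfolding adm_def using F by blast
qed

lemma finite_V: "finite (V n P)"
proof (rule finite_subset)
  show "V n P \<subseteq> Pow ({1..n} \<times> {1..n})" unfolding V_def LO_def by auto
qed auto

lemma finite_adm: "finite {S. adm n P r S \<and> Q S}"
proof (rule finite_subset)
  show "{S. adm n P r S \<and> Q S} \<subseteq> Pow {1..n}" unfolding adm_def final_def by auto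
qed auto

lemma count_ins:
  "card {r \<in> V (Suc n) P. Q r} = (\<Sum>r'\<in>V n P. card {S. adm n P r' S \<and> Q (ins n r' S)})"
proof -
  let ?A = "{r \<in> V (Suc n) P. Q r}"
  let ?B = "SIGMA r':V n P. {S. adm n P r' S \<and> Q (ins n r' S)}"
  have "bij_betw (\<lambda>r. (res n r, up n r)) ?A ?B"
  proof (rule bij_betw_byWitness[where f' = "\<lambda>(r',S). ins n r' S"])
    show "\<forall>a\<in>?A. (\<lambda>(r',S). ins n r' S) (res n a, up n a) = a"
      unfolding V_def using ins_res by auto
    show "\<forall>a\<in>?B. (\<lambda>r. (res n r, up n r)) ((\<lambda>(r',S). ins n r' S) a) = a"
    proof
      fix a assume "a \<in> ?B"
      then obtain r' S where a: "a = (r',S)" "r' \<in> LO n" "adm n P r' S" unfolding V_def by auto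
      then have "S \<subseteq> {1..n}" unfolding adm_def final_def by auto
      then show "(\<lambda>r. (res n r, up n r)) ((\<lambda>(r',S). ins n r' S) a) = a"
        using a res_ins up_ins by auto
    qed
    show "(\<lambda>r. (res n r, up n r)) ` ?A \<subseteq> ?B"
    proof
      fix b assume "b \<in> (\<lambda>r. (res n r, up n r)) ` ?A"
      then obtain r where r: "r \<in> LO (Suc n)" "good (Suc n) P r" "Q r" "b = (res n r, up n r)"
        unfolding V_def by auto
      have L: "res n r \<in> LO n" using LO_res[OF r(1)] .
      have F: "final n (res n r) (up n r)" using up_final[OF r(1)] .
      have E: "ins n (res n r) (up n r) = r" using ins_res[OF r(1)] .
      have "good n P (res n r) \<and> adm n P (res n r) (up n r)"
        using good_ins[OF L F, of P] r(2) E by simp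
      then show "b \<in> ?B" using r L E unfolding V_def by auto
    qed
    show "(\<lambda>(r',S). ins n r' S) ` ?B \<subseteq> ?A"
    proof
      fix b assume "b \<in> (\<lambda>(r',S). ins n r' S) ` ?B"
      then obtain r' S where a: "b = ins n r' S" "r' \<in> LO n" "good n P r'" "adm n P r' S" "Q (ins n r' S)"
        unfolding V_def by auto
      have F: "final n r' S" using a(4) unfolding adm_def by auto
      show "b \<in> ?A" using a ins_LO[OF a(2) F] good_ins[OF a(2) F, of P] unfolding V_def by auto
    qed
  qed
  then have "card ?A = card ?B" by (rule bij_betw_same_card)
  also have "\<dots> = (\<Sum>r'\<in>V n P. card {S. adm n P r' S \<and> Q (ins n r' S)})"
    using finite_V finite_adm by (intro card_SigmaI) auto
  finally show ?thesis .
qed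

definition topel :: "nat \<Rightarrow> nat rel \<Rightarrow> nat \<Rightarrow> bool" where
  "topel m r x \<longleftrightarrow> x \<in> {1..m} \<and> (\<forall>y\<in>{1..m}. (y,x) \<in> r)"

definition second :: "nat \<Rightarrow> nat rel \<Rightarrow> nat \<Rightarrow> nat \<Rightarrow> bool" where
  "second m r b z \<longleftrightarrow> z \<in> {1..m} \<and> z \<noteq> b \<and> (\<forall>y\<in>{1..m}-{b}. (y,z) \<in> r)"

definition Ep :: "nat \<Rightarrow> nat rel \<Rightarrow> nat \<Rightarrow> bool" where
  "Ep m r b \<longleftrightarrow> topel m r b \<and> (\<exists>z. z < b \<and> second m r b z)"

lemma top_unique: "r \<in> LO m \<Longrightarrow> topel m r x \<Longrightarrow> topel m r y \<Longrightarrow> x = y"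
  unfolding topel_def using LO_antisym by blast

lemma second_unique: "r \<in> LO m \<Longrightarrow> second m r b x \<Longrightarrow> second m r b y \<Longrightarrow> x = y"
  unfolding second_def using LO_antisym by blast

lemma top_ex: "r \<in> LO (Suc n) \<Longrightarrow> \<exists>x. topel (Suc n) r x"
proof (induction n arbitrary: r)
  case 0
  then show ?case unfolding topel_def using LO_refl[OF 0, of 1] by auto
next
  case (Suc n)
  have L: "res (Suc n) r \<in> LO (Suc n)" using LO_res[OF Suc.prems] .
  obtain x where x: "topel (Suc n) (res (Suc n) r) x" using Suc.IH[OF L] by blast
  have xr: "x \<in> {1..Suc n}" "\<forall>y\<in>{1..Suc n}. (y,x) \<in> r" using x unfolding topel_def res_def by auto
  show ?case
  proof (cases "(x, Suc (Suc n)) \<in> r")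
    case True
    have "topel (Suc (Suc n)) r (Suc (Suc n))"
      unfolding topel_def
    proof (intro conjI ballI)
      fix y assume y: "y \<in> {1..Suc (Suc n)}"
      show "(y, Suc (Suc n)) \<in> r"
      proof (cases "y = Suc (Suc n)")
        case True then show ?thesis using LO_refl[OF Suc.prems, of y] y by auto
      next
        case False
        then have "y \<in> {1..Suc n}" using y by auto
        then show ?thesis using xr True LO_trans[OF Suc.prems, of y x "Suc (Suc n)"] by auto
      qed
    qed auto
    then show ?thesis by blast
  next
    case False
    then have "(Suc (Suc n), x) \<in> r" using LO_total[OF Suc.prems, of x "Suc (Suc n)"] xr by auto
    then have "topel (Suc (Suc n)) r x" using xr unfolding topel_def
      by (auto simp: le_Suc_eq)
    then show ?thesis by blast
  qed
qed

lemma adm_empty: "adm n P r {}"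
  unfolding adm_def final_def by auto

lemma adm_inactive:
  assumes r: "r \<in> LO n" and x: "topel n r x" and I: "\<forall>j. 2 \<le> j \<and> j \<le> n \<longrightarrow> \<not> P j"
  shows "{S. adm n P r S} = {{}, {x}}"
proof (intro equalityI subsetI)
  fix S assume "S \<in> {S. adm n P r S}"
  then have A: "adm n P r S" by simp
  have Ss: "S \<subseteq> {1..n}" and Sc: "\<And>u v. u \<in> S \<Longrightarrow> (u,v) \<in> r \<Longrightarrow> v \<in> S"
    using A unfolding adm_def final_def by auto
  have C1: "\<And>i j. 1 \<le> i \<Longrightarrow> i < j \<Longrightarrow> j \<le> n \<Longrightarrow> \<not> P j \<Longrightarrow> \<not> (i \<in> S \<and> j \<in> S)"
    using A unfolding adm_def by blast
  have one: "u = v" if "u \<in> S" "v \<in> S" for u v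
  proof (rule ccontr)
    assume "u \<noteq> v"
    then consider "u < v" | "v < u" by linarith
    then show False
    proof cases
      case 1 then show False using C1[of u v] I that Ss by force
    next
      case 2 then show False using C1[of v u] I that Ss by force
    qed
  qed
  show "S \<in> {{}, {x}}"
  proof (cases "S = {}")
    case False
    then obtain w where w: "w \<in> S" by blast
    have "(w,x) \<in> r" using x w Ss unfolding topel_def by auto
    then have "x \<in> S" using Sc w by blast
    then have "S = {x}" using one by blast
    then show ?thesis by simp
  qed simp
next
  fix S assume "S \<in> {{}, {x}}"
  then consider "S = {}" | "S = {x}" by blast
  then show "S \<in> {S. adm n P r S}"
  proof cases
    case 1 then show ?thesis using adm_empty by simp
  next
    case 2
    have "final n r {x}" unfolding final_def
      using x LO_antisym[OF r] LO_sub[OF r] unfolding topel_def by blast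
    moreover have "\<forall>i j. 1 \<le> i \<and> i < j \<and> j \<le> n \<and> P j \<longrightarrow> \<not> (i \<in> {x} \<and> (j,i) \<in> r)"
      using I by auto
    ultimately show ?thesis unfolding adm_def 2 by auto
  qed
qed

lemma adm_active:
  assumes r: "r \<in> LO n" and x: "topel n r x" and HB: "\<forall>j\<ge>1. P j \<longleftrightarrow> j = b"
    and b2: "2 \<le> b" and bn: "b \<le> n"
  shows "adm n P r S \<longleftrightarrow> S = {} \<or> (S = {x} \<and> b \<le> x) \<or> (\<exists>z. S = {z,b} \<and> z < b \<and> topel n r b \<and> second n r b z)"
proof
  assume A: "adm n P r S"
  have Ss: "S \<subseteq> {1..n}" and Sc: "\<And>u v. u \<in> S \<Longrightarrow> (u,v) \<in> r \<Longrightarrow> v \<in> S"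
    using A unfolding adm_def final_def by auto
  have c1: "\<forall>i j. 1 \<le> i \<and> i < j \<and> j \<le> n \<and> \<not> P j \<longrightarrow> \<not> (i \<in> S \<and> j \<in> S)"
    and c2: "\<forall>i j. 1 \<le> i \<and> i < j \<and> j \<le> n \<and> P j \<longrightarrow> \<not> (i \<in> S \<and> (j,i) \<in> r)"
    using A unfolding adm_def by blast+
  have C1: "\<And>i j. i \<in> S \<Longrightarrow> j \<in> S \<Longrightarrow> i < j \<Longrightarrow> j = b"
  proof -
    fix i j assume a: "i \<in> S" "j \<in> S" "i < j"
    then have "1 \<le> i" "j \<le> n" using Ss by auto
    then have "P j" using c1[rule_format, of i j] a by blast
    moreover have "j \<ge> 1" using \<open>1 \<le> i\<close> a by simp
    ultimately show "j = b" using HB by blast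
  qed
  have C2: "\<And>i. i \<in> S \<Longrightarrow> i < b \<Longrightarrow> (b,i) \<notin> r"
  proof -
    fix i assume a: "i \<in> S" "i < b"
    then have "1 \<le> i" using Ss by auto
    moreover have "P b" using HB b2 by simp
    ultimately show "(b,i) \<notin> r" using c2[rule_format, of i b] a bn by blast
  qed
  have bin: "b \<in> {1..n}" using b2 bn by auto
  show "S = {} \<or> (S = {x} \<and> b \<le> x) \<or> (\<exists>z. S = {z,b} \<and> z < b \<and> topel n r b \<and> second n r b z)"
  proof (cases "S = {}")
    case False
    then obtain w where w: "w \<in> S" by blast
    show ?thesis
    proof (cases "\<exists>u\<in>S. \<exists>v\<in>S. u < v")
      case False
      then have one: "\<And>u v. u \<in> S \<Longrightarrow> v \<in> S \<Longrightarrow> u = v" by (meson linorder_neqE_nat)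
      have "(w,x) \<in> r" using x w Ss unfolding topel_def by auto
      then have xS: "x \<in> S" using Sc w by blast
      then have "S = {x}" using one by blast
      moreover have "b \<le> x"
      proof (rule ccontr)
        assume "\<not> b \<le> x"
        then have "(b,x) \<notin> r" using C2 xS by auto
        then show False using x bin unfolding topel_def by auto
      qed
      ultimately show ?thesis by blast
    next
      case True
      then obtain u v where uv: "u \<in> S" "v \<in> S" "u < v" by blast
      then have vb: "v = b" using C1 by blast
      have Seq: "S = {u,b}"
      proof (intro equalityI subsetI)
        fix y assume y: "y \<in> S"
        show "y \<in> {u,b}"
        proof (rule ccontr)
          assume "y \<notin> {u,b}"
          then have "y \<noteq> u" "y \<noteq> b" by auto
          then consider "y < u" | "u < y \<and> y < b" | "b < y" using uv vb by linarith
          then show False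
          proof cases
            case 1 then show False using C1[OF y uv(1)] uv vb by auto
          next
            case 2 then show False using C1[OF uv(1) y] \<open>y \<noteq> b\<close> by auto
          next
            case 3 then show False using C1[OF uv(2) y] vb \<open>y \<noteq> b\<close> by auto
          qed
        qed
      qed (use uv vb in auto)
      have ub: "u < b" using uv vb by simp
      have uin: "u \<in> {1..n}" using uv Ss by auto
      have nbu: "(b,u) \<notin> r" using C2[OF uv(1) ub] .
      have ubr: "(u,b) \<in> r" using LO_total[OF r uin bin] nbu by auto
      have tb: "topel n r b" unfolding topel_def
      proof (intro conjI ballI)
        fix y assume y: "y \<in> {1..n}"
        show "(y,b) \<in> r"
        proof (cases "(b,y) \<in> r")
          case True
          then have "y \<in> S" using Sc uv vb by blast
          then have "y = b" using Seq True nbu by auto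
          then show ?thesis using LO_refl[OF r y] by simp
        next
          case False then show ?thesis using LO_total[OF r y bin] by auto
        qed
      qed (use bin in auto)
      have sz: "second n r b u" unfolding second_def
      proof (intro conjI ballI)
        fix y assume y: "y \<in> {1..n} - {b}"
        show "(y,u) \<in> r"
        proof (cases "(u,y) \<in> r")
          case True
          then have "y \<in> S" using Sc uv by blast
          then have "y = u" using Seq y by auto
          then show ?thesis using LO_refl[OF r uin] by simp
        next
          case False then show ?thesis using LO_total[OF r _ uin, of y] y by auto
        qed
      qed (use uin ub in auto)
      show ?thesis using Seq ub tb sz by blast
    qed
  qed simp
next
  have bin: "b \<in> {1..n}" using b2 bn by auto
  assume "S = {} \<or> (S = {x} \<and> b \<le> x) \<or> (\<exists>z. S = {z,b} \<and> z < b \<and> topel n r b \<and> second n r b z)"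
  then consider "S = {}" | "S = {x}" "b \<le> x" | z where "S = {z,b}" "z < b" "topel n r b" "second n r b z"
    by blast
  then show "adm n P r S"
  proof cases
    case 1 then show ?thesis using adm_empty by simp
  next
    case 2
    have "final n r {x}" unfolding final_def
      using x LO_antisym[OF r] LO_sub[OF r] unfolding topel_def by blast
    moreover have "\<forall>i j. 1 \<le> i \<and> i < j \<and> j \<le> n \<and> P j \<longrightarrow> \<not> (i \<in> {x} \<and> (j,i) \<in> r)"
      using HB 2 by auto
    ultimately show ?thesis unfolding adm_def 2 by auto
  next
    case 3
    have zin: "z \<in> {1..n}" "z \<noteq> b" using 3 unfolding second_def by auto
    have zb: "(z,b) \<in> r" using 3 zin unfolding topel_def by auto
    have nbz: "(b,z) \<notin> r" using LO_antisym[OF r zb] zin by auto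
    have "final n r {z,b}" unfolding final_def
    proof (intro conjI allI impI)
      show "{z,b} \<subseteq> {1..n}" using zin bin by auto
      fix u v assume u: "u \<in> {z,b}" and uv: "(u,v) \<in> r"
      have vin: "v \<in> {1..n}" using LO_sub[OF r uv] by auto
      show "v \<in> {z,b}"
      proof (cases "u = b")
        case True
        have "(v,b) \<in> r" using 3 vin unfolding topel_def by auto
        then show ?thesis using LO_antisym[OF r] uv True by auto
      next
        case False
        then have uz: "u = z" using u by auto
        show ?thesis
        proof (cases "v = b")
          case False
          then have "(v,z) \<in> r" using 3 vin unfolding second_def by auto
          then show ?thesis using LO_antisym[OF r] uv uz by auto
        qed simp
      qed
    qed
    moreover have "\<forall>i j. 1 \<le> i \<and> i < j \<and> j \<le> n \<and> \<not> P j \<longrightarrow> \<not> (i \<in> {z,b} \<and> j \<in> {z,b})"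
      using HB 3 by auto
    moreover have "\<forall>i j. 1 \<le> i \<and> i < j \<and> j \<le> n \<and> P j \<longrightarrow> \<not> (i \<in> {z,b} \<and> (j,i) \<in> r)"
      using HB 3 nbz by auto
    ultimately show ?thesis unfolding adm_def 3 by auto
  qed
qed

lemma top_ins_empty: assumes "r \<in> LO n" shows "topel (Suc n) (ins n r {}) (Suc n)"
  unfolding topel_def mem_ins by (auto simp: le_Suc_eq)

lemma not_top_ins: assumes r: "r \<in> LO n" and xS: "x \<in> S" and S: "S \<subseteq> {1..n}"
  shows "\<not> topel (Suc n) (ins n r S) (Suc n)"
proof
  assume "topel (Suc n) (ins n r S) (Suc n)"
  moreover have "x \<in> {1..Suc n}" using xS S by auto
  ultimately have "(x, Suc n) \<in> ins n r S" unfolding topel_def by blast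
  then show False using LO_sub[OF r, of x "Suc n"] xS subsetD[OF S xS] unfolding mem_ins by auto
qed

lemma Ep_ins_empty: assumes r: "r \<in> LO n" and x: "topel n r x"
  shows "Ep (Suc n) (ins n r {}) (Suc n)"
proof -
  have "second (Suc n) (ins n r {}) (Suc n) x"
    using x unfolding second_def topel_def mem_ins by auto
  moreover have "x < Suc n" using x unfolding topel_def by auto
  ultimately show ?thesis unfolding Ep_def using top_ins_empty[OF r] by blast
qed

lemma sum_ind: "finite A \<Longrightarrow> (\<Sum>x\<in>A. if Q x then 1 else 0 :: nat) = card {x\<in>A. Q x}"
  by (simp add: sum.If_cases Int_def)

lemma V_0: "V 0 P = {{}}"
proof (intro equalityI subsetI)
  fix r assume "r \<in> V 0 P"
  then have "r \<in> LO 0" unfolding V_def by auto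
  then show "r \<in> {{}}" using LO_sub by fastforce
next
  fix r :: "nat rel" assume "r \<in> {{}}"
  then have r: "r = {}" by simp
  have "{} \<in> LO 0" by (rule LO_I) auto
  moreover have "good 0 P {}" unfolding good_def by auto
  ultimately show "r \<in> V 0 P" unfolding V_def r by auto
qed

lemma N_1: "card (V (Suc 0) P) = 1"
proof -
  have "card {r \<in> V (Suc 0) P. True} = (\<Sum>r'\<in>V 0 P. card {S. adm 0 P r' S \<and> True})"
    by (rule count_ins)
  also have "\<dots> = card {S. adm 0 P {} S}" by (simp add: V_0)
  also have "{S. adm 0 P {} S} = {{}}" unfolding adm_def final_def by auto
  finally show ?thesis by simp
qed

lemma rec_inactive:
  assumes n: "1 \<le> n" and I: "\<forall>j. 2 \<le> j \<and> j \<le> n \<longrightarrow> \<not> P j"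
  shows "card (V (Suc n) P) = 2 * card (V n P)"
    and "card {r \<in> V (Suc n) P. topel (Suc n) r (Suc n)} = card (V n P)"
    and "card {r \<in> V (Suc n) P. Ep (Suc n) r (Suc n)} = card (V n P)"
proof -
  have tx: "\<exists>x. topel n r x \<and> {S. adm n P r S} = {{}, {x}} \<and> x \<in> {1..n}" if "r \<in> V n P" for r
  proof -
    have r: "r \<in> LO n" using that unfolding V_def by auto
    obtain n' where "n = Suc n'" using n by (cases n) auto
    then obtain x where x: "topel n r x" using top_ex r by blast
    show ?thesis using adm_inactive[OF r x I] x unfolding topel_def by blast
  qed
  have "card {r \<in> V (Suc n) P. True} = (\<Sum>r'\<in>V n P. card {S. adm n P r' S \<and> True})"
    by (rule count_ins)
  also have "\<dots> = (\<Sum>r'\<in>V n P. 2)"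
  proof (rule sum.cong)
    fix r assume "r \<in> V n P"
    then obtain x where "{S. adm n P r S} = {{}, {x}}" using tx by blast
    then show "card {S. adm n P r S \<and> True} = 2" by simp
  qed simp
  finally show "card (V (Suc n) P) = 2 * card (V n P)" by simp
  have "card {r \<in> V (Suc n) P. topel (Suc n) r (Suc n)} = (\<Sum>r'\<in>V n P. card {S. adm n P r' S \<and> topel (Suc n) (ins n r' S) (Suc n)})"
    by (rule count_ins)
  also have "\<dots> = (\<Sum>r'\<in>V n P. 1)"
  proof (rule sum.cong)
    fix r assume rV: "r \<in> V n P"
    then have r: "r \<in> LO n" unfolding V_def by auto
    obtain x where x: "topel n r x" "{S. adm n P r S} = {{}, {x}}" "x \<in> {1..n}" using tx rV by blast
    have "{S. adm n P r S \<and> topel (Suc n) (ins n r S) (Suc n)} = {{}}"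
    proof -
      have "{S. adm n P r S \<and> topel (Suc n) (ins n r S) (Suc n)} = {S \<in> {{}, {x}}. topel (Suc n) (ins n r S) (Suc n)}"
        using x(2) by blast
      also have "\<dots> = {{}}" using top_ins_empty[OF r] not_top_ins[OF r, of x "{x}"] x(3) by auto
      finally show ?thesis .
    qed
    then show "card {S. adm n P r S \<and> topel (Suc n) (ins n r S) (Suc n)} = 1" by simp
  qed simp
  finally show "card {r \<in> V (Suc n) P. topel (Suc n) r (Suc n)} = card (V n P)" by simp
  have "card {r \<in> V (Suc n) P. Ep (Suc n) r (Suc n)} = (\<Sum>r'\<in>V n P. card {S. adm n P r' S \<and> Ep (Suc n) (ins n r' S) (Suc n)})"
    by (rule count_ins)
  also have "\<dots> = (\<Sum>r'\<in>V n P. 1)"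
  proof (rule sum.cong)
    fix r assume rV: "r \<in> V n P"
    then have r: "r \<in> LO n" unfolding V_def by auto
    obtain x where x: "topel n r x" "{S. adm n P r S} = {{}, {x}}" "x \<in> {1..n}" using tx rV by blast
    have "{S. adm n P r S \<and> Ep (Suc n) (ins n r S) (Suc n)} = {{}}"
    proof -
      have "{S. adm n P r S \<and> Ep (Suc n) (ins n r S) (Suc n)} = {S \<in> {{}, {x}}. Ep (Suc n) (ins n r S) (Suc n)}"
        using x(2) by blast
      also have "\<dots> = {{}}" using Ep_ins_empty[OF r x(1)] not_top_ins[OF r, of x "{x}"] x(3)
        unfolding Ep_def by auto
      finally show ?thesis .
    qed
    then show "card {S. adm n P r S \<and> Ep (Suc n) (ins n r S) (Suc n)} = 1" by simp
  qed simp
  finally show "card {r \<in> V (Suc n) P. Ep (Suc n) r (Suc n)} = card (V n P)" by simp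
qed

definition Th :: "nat \<Rightarrow> nat rel \<Rightarrow> nat \<Rightarrow> nat set set" where
  "Th n r b = {S. \<exists>z. S = {z,b} \<and> z < b \<and> topel n r b \<and> second n r b z}"

lemma card_Th: assumes r: "r \<in> LO n" shows "card (Th n r b) = (if Ep n r b then 1 else 0)"
proof (cases "Ep n r b")
  case True
  then obtain z where z: "z < b" "topel n r b" "second n r b z" unfolding Ep_def by blast
  have "Th n r b = {{z,b}}"
    unfolding Th_def using z second_unique[OF r z(3)] by blast
  then show ?thesis using True by simp
next
  case False
  then have "Th n r b = {}" unfolding Th_def Ep_def by blast
  then show ?thesis using False by simp
qed

lemma finite_Th: "finite (Th n r b)"
proof (rule finite_subset)
  show "Th n r b \<subseteq> Pow {1..n}" unfolding Th_def second_def topel_def by auto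
qed auto

lemma top_LO_ex: assumes r: "r \<in> LO n" and n: "1 \<le> n" shows "\<exists>x. topel n r x"
proof -
  obtain n' where "n = Suc n'" using n by (cases n) auto
  then show ?thesis using top_ex r by blast
qed

lemma rec_active:
  assumes HB: "\<forall>j\<ge>1. P j \<longleftrightarrow> j = b" and b2: "2 \<le> b" and bn: "b \<le> n"
  shows "card (V (Suc n) P) = card (V n P) + card {r \<in> V n P. \<exists>x. topel n r x \<and> b \<le> x} + card {r \<in> V n P. Ep n r b}"
    and "card {r \<in> V (Suc n) P. Ep (Suc n) r b} = card {r \<in> V n P. Ep n r b}"
proof -
  have "card {r \<in> V (Suc n) P. True} = (\<Sum>r'\<in>V n P. card {S. adm n P r' S \<and> True})"
    by (rule count_ins)
  also have "\<dots> = (\<Sum>r'\<in>V n P. 1 + (if \<exists>x. topel n r' x \<and> b \<le> x then 1 else 0) + (if Ep n r' b then 1 else 0))"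
  proof (rule sum.cong)
    fix r assume rV: "r \<in> V n P"
    then have r: "r \<in> LO n" unfolding V_def by auto
    obtain x where x: "topel n r x" using top_LO_ex[OF r] b2 bn by auto
    let ?A1 = "{S. S = {x} \<and> b \<le> x}"
    have eq: "{S. adm n P r S \<and> True} = insert {} (?A1 \<union> Th n r b)"
      using adm_active[OF r x HB b2 bn] unfolding Th_def by auto
    have d1: "{} \<notin> ?A1 \<union> Th n r b" unfolding Th_def by auto
    have d2: "?A1 \<inter> Th n r b = {}" unfolding Th_def by (auto simp: doubleton_eq_iff)
    have c1: "card ?A1 = (if \<exists>x. topel n r x \<and> b \<le> x then 1 else 0)"
    proof (cases "b \<le> x")
      case True
      then have "?A1 = {{x}}" by auto
      then show ?thesis using True x by auto
    next
      case False
      then have "?A1 = {}" by auto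
      moreover have "\<not> (\<exists>x. topel n r x \<and> b \<le> x)" using False top_unique[OF r x] by blast
      ultimately show ?thesis by simp
    qed
    have fA1: "finite ?A1" by (rule finite_subset[of _ "{{x}}"]) auto
    have "card {S. adm n P r S \<and> True} = Suc (card (?A1 \<union> Th n r b))"
      unfolding eq using d1 fA1 finite_Th by simp
    also have "\<dots> = Suc (card ?A1 + card (Th n r b))"
      using d2 fA1 finite_Th by (simp add: card_Un_disjoint)
    finally show "card {S. adm n P r S \<and> True} = 1 + (if \<exists>x. topel n r x \<and> b \<le> x then 1 else 0) + (if Ep n r b then 1 else 0)"
      using c1 card_Th[OF r, of b] by simp
  qed simp
  also have "\<dots> = (\<Sum>r'\<in>V n P. 1) + (\<Sum>r'\<in>V n P. (if \<exists>x. topel n r' x \<and> b \<le> x then 1 else 0)) + (\<Sum>r'\<in>V n P. (if Ep n r' b then 1 else 0))"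
    by (simp only: sum.distrib)
  also have "\<dots> = card (V n P) + card {r \<in> V n P. \<exists>x. topel n r x \<and> b \<le> x} + card {r \<in> V n P. Ep n r b}"
    by (simp only: sum_ind[OF finite_V] card_eq_sum[symmetric])
  finally show "card (V (Suc n) P) = card (V n P) + card {r \<in> V n P. \<exists>x. topel n r x \<and> b \<le> x} + card {r \<in> V n P. Ep n r b}"
    by simp
  have "card {r \<in> V (Suc n) P. Ep (Suc n) r b} = (\<Sum>r'\<in>V n P. card {S. adm n P r' S \<and> Ep (Suc n) (ins n r' S) b})"
    by (rule count_ins)
  also have "\<dots> = (\<Sum>r'\<in>V n P. (if Ep n r' b then 1 else 0))"
  proof (rule sum.cong)
    fix r assume rV: "r \<in> V n P"
    then have r: "r \<in> LO n" unfolding V_def by auto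
    obtain x where x: "topel n r x" using top_LO_ex[OF r] b2 bn by auto
    have bin: "b \<in> {1..n}" using b2 bn by auto
    have "{S. adm n P r S \<and> Ep (Suc n) (ins n r S) b} = Th n r b"
    proof (intro equalityI subsetI)
      fix S assume "S \<in> {S. adm n P r S \<and> Ep (Suc n) (ins n r S) b}"
      then have A: "adm n P r S" and E: "Ep (Suc n) (ins n r S) b" by auto
      obtain z where z: "z < b" "topel (Suc n) (ins n r S) b" "second (Suc n) (ins n r S) b z"
        using E unfolding Ep_def by blast
      have "(Suc n, b) \<in> ins n r S" using z(2) unfolding topel_def by auto
      then have bS: "b \<in> S" using LO_sub[OF r, of "Suc n" b] bn unfolding mem_ins by auto
      have "(Suc n, z) \<in> ins n r S" using z(3) bn unfolding second_def by auto
      then have zS: "z \<in> S" using LO_sub[OF r, of "Suc n" z] z(1) bn unfolding mem_ins by auto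
      show "S \<in> Th n r b"
        using adm_active[OF r x HB b2 bn, of S] A bS zS z(1) unfolding Th_def by auto
    next
      fix S assume S: "S \<in> Th n r b"
      then obtain z where z: "S = {z,b}" "z < b" "topel n r b" "second n r b z" unfolding Th_def by blast
      have A: "adm n P r S" using adm_active[OF r x HB b2 bn, of S] z by blast
      have zin: "z \<in> {1..n}" using z(4) unfolding second_def by auto
      have "topel (Suc n) (ins n r S) b" using z(3) bin unfolding topel_def mem_ins z(1)
        by (auto simp: le_Suc_eq)
      moreover have "second (Suc n) (ins n r S) b z" using z(4) zin unfolding second_def mem_ins z(1)
        by (auto simp: le_Suc_eq)
      ultimately have "Ep (Suc n) (ins n r S) b" unfolding Ep_def using z(2) by blast
      then show "S \<in> {S. adm n P r S \<and> Ep (Suc n) (ins n r S) b}" using A by simp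
    qed
    then show "card {S. adm n P r S \<and> Ep (Suc n) (ins n r S) b} = (if Ep n r b then 1 else 0)"
      using card_Th[OF r] by simp
  qed simp
  also have "\<dots> = card {r \<in> V n P. Ep n r b}" by (simp add: sum_ind finite_V)
  finally show "card {r \<in> V (Suc n) P. Ep (Suc n) r b} = card {r \<in> V n P. Ep n r b}" .
qed

lemma T_full:
  assumes HB: "\<forall>j\<ge>1. P j \<longleftrightarrow> j = b" and b2: "2 \<le> b" and bm: "b < m"
  shows "{r \<in> V m P. \<exists>x. topel m r x \<and> b \<le> x} = V m P"
proof (intro equalityI subsetI)
  fix r assume rV: "r \<in> V m P"
  then have r: "r \<in> LO m" and g: "good m P r" unfolding V_def by auto
  obtain x where x: "topel m r x" using top_LO_ex[OF r] bm by auto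
  have "b \<le> x"
  proof (rule ccontr)
    assume "\<not> b \<le> x"
    then have xb: "x < b" by simp
    have x1: "1 \<le> x" using x unfolding topel_def by auto
    have "P b" using HB b2 by auto
    then have "\<not> ((b,x) \<in> r \<and> (m,x) \<in> r)" using g[unfolded good_def, rule_format, of x b m] x1 xb bm by auto
    moreover have "(b,x) \<in> r" "(m,x) \<in> r" using x b2 bm unfolding topel_def by auto
    ultimately show False by blast
  qed
  then show "r \<in> {r \<in> V m P. \<exists>x. topel m r x \<and> b \<le> x}" using rV x by blast
qed auto

lemma N_inactive: "1 \<le> m \<Longrightarrow> (\<forall>j. 2 \<le> j \<and> j < m \<longrightarrow> \<not> P j) \<Longrightarrow> card (V m P) = 2^(m-1)"
proof (induction m)
  case 0 then show ?case by simp
next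
  case (Suc m)
  show ?case
  proof (cases "m = 0")
    case True then show ?thesis using N_1 by simp
  next
    case False
    then have m1: "1 \<le> m" by simp
    have I: "\<forall>j. 2 \<le> j \<and> j \<le> m \<longrightarrow> \<not> P j" using Suc.prems(2) by auto
    have "card (V m P) = 2^(m-1)" using Suc.IH m1 Suc.prems(2) by auto
    moreover have "card (V (Suc m) P) = 2 * card (V m P)" using rec_inactive(1)[OF m1 I] .
    ultimately show ?thesis using m1 by (cases m) auto
  qed
qed

lemma Ep_const:
  assumes HB: "\<forall>j\<ge>1. P j \<longleftrightarrow> j = b" and b2: "2 \<le> b"
  shows "card {r \<in> V (b + d) P. Ep (b + d) r b} = 2^(b-2)"
proof (induction d)
  case 0
  obtain c where c: "b = Suc (Suc c)" using b2 by (metis add_2_eq_Suc le_Suc_ex)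
  have c1: "1 \<le> Suc c" by simp
  have I: "\<forall>j. 2 \<le> j \<and> j \<le> Suc c \<longrightarrow> \<not> P j" using HB c by auto
  have "card {r \<in> V (Suc (Suc c)) P. Ep (Suc (Suc c)) r (Suc (Suc c))} = card (V (Suc c) P)"
    using rec_inactive(3)[OF c1 I] .
  also have "\<dots> = 2^c" using N_inactive[of "Suc c" P] I by auto
  finally show ?case using c by simp
next
  case (Suc d)
  have "card {r \<in> V (Suc (b + d)) P. Ep (Suc (b + d)) r b} = card {r \<in> V (b + d) P. Ep (b + d) r b}"
    using rec_active(2)[OF HB b2, of "b + d"] by simp
  then show ?case using Suc.IH by simp
qed

lemma N_b1:
  assumes HB: "\<forall>j\<ge>1. P j \<longleftrightarrow> j = b" and b2: "2 \<le> b"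
  shows "card (V (Suc b) P) = 2^b"
proof -
  obtain c where c: "b = Suc (Suc c)" using b2 by (metis add_2_eq_Suc le_Suc_ex)
  have c1: "1 \<le> Suc c" by simp
  have I: "\<forall>j. 2 \<le> j \<and> j \<le> Suc c \<longrightarrow> \<not> P j" using HB c by auto
  have Nb: "card (V b P) = 2^(b-1)" using N_inactive[of b P] HB b2 by auto
  have "{r \<in> V b P. \<exists>x. topel b r x \<and> b \<le> x} = {r \<in> V b P. topel b r b}"
    unfolding topel_def by (auto simp: le_antisym)
  then have Tb: "card {r \<in> V b P. \<exists>x. topel b r x \<and> b \<le> x} = 2^c"
    using rec_inactive(2)[OF c1 I] N_inactive[of "Suc c" P] I c by auto
  have Eb: "card {r \<in> V b P. Ep b r b} = 2^c" using Ep_const[OF HB b2, of 0] c by simp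
  have "card (V (Suc b) P) = card (V b P) + card {r \<in> V b P. \<exists>x. topel b r x \<and> b \<le> x} + card {r \<in> V b P. Ep b r b}"
    using rec_active(1)[OF HB b2 le_refl] .
  then show ?thesis using Nb Tb Eb c by simp
qed

lemma N_big:
  assumes HB: "\<forall>j\<ge>1. P j \<longleftrightarrow> j = b" and b2: "2 \<le> b"
  shows "int (card (V (Suc b + d) P)) = 5 * 2^(b - 2 + d) - 2^(b-2)"
proof (induction d)
  case 0
  obtain c where c: "b = Suc (Suc c)" using b2 by (metis add_2_eq_Suc le_Suc_ex)
  show ?case using N_b1[OF HB b2] c by simp
next
  case (Suc d)
  have m: "b < Suc b + d" by simp
  have T: "card {r \<in> V (Suc b + d) P. \<exists>x. topel (Suc b + d) r x \<and> b \<le> x} = card (V (Suc b + d) P)"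
    using T_full[OF HB b2 m] by simp
  have E: "card {r \<in> V (Suc b + d) P. Ep (Suc b + d) r b} = 2^(b-2)"
    using Ep_const[OF HB b2, of "Suc d"] by simp
  have "card (V (Suc (Suc b + d)) P) = card (V (Suc b + d) P) + card {r \<in> V (Suc b + d) P. \<exists>x. topel (Suc b + d) r x \<and> b \<le> x} + card {r \<in> V (Suc b + d) P. Ep (Suc b + d) r b}"
    using rec_active(1)[OF HB b2, of "Suc b + d"] by simp
  then have "int (card (V (Suc b + Suc d) P)) = 2 * int (card (V (Suc b + d) P)) + 2^(b-2)"
    using T E by simp
  also have "\<dots> = 2 * (5 * 2^(b - 2 + d) - 2^(b-2)) + 2^(b-2)" using Suc.IH by simp
  also have "\<dots> = 5 * (2 * 2^(b - 2 + d)) - 2^(b-2)" by (simp add: algebra_simps)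
  also have "\<dots> = 5 * 2^(b - 2 + Suc d) - 2^(b-2)" by simp
  finally show ?case .
qed

lemma F_val:
  assumes HB: "\<forall>j\<ge>1. P j \<longleftrightarrow> j = b" and m1: "1 \<le> m"
  shows "(b \<le> 1 \<or> m \<le> b + 1) \<Longrightarrow> card (V m P) = 2^(m-1)"
    and "2 \<le> b \<Longrightarrow> b + 2 \<le> m \<Longrightarrow> int (card (V m P)) = 5 * 2^(m-3) - 2^(b-2)"
proof -
  assume a: "b \<le> 1 \<or> m \<le> b + 1"
  show "card (V m P) = 2^(m-1)"
  proof (cases "2 \<le> b \<and> m = b + 1")
    case True
    then show ?thesis using N_b1[OF HB] by simp
  next
    case False
    then have "\<forall>j. 2 \<le> j \<and> j < m \<longrightarrow> \<not> P j" using a HB by auto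
    then show ?thesis using N_inactive[OF m1] by blast
  qed
next
  assume b2: "2 \<le> b" and bm: "b + 2 \<le> m"
  define d where "d = m - b - 2"
  have d: "m = Suc b + Suc d" using bm unfolding d_def by arith
  have e: "m - 3 = b - 2 + Suc d" using d b2 by simp
  show "int (card (V m P)) = 5 * 2^(m-3) - 2^(b-2)" unfolding e
    by (subst d) (rule N_big[OF HB b2])
qed

theorem proposition6:
  fixes n k :: nat
  assumes "n \<ge> 1" and "k \<ge> 1"
  shows "(k = 1 \<longrightarrow> f n {int n - int k} = 2 ^ (n - 1) \<and> f n {int k} = 2 ^ (n - 1))
     \<and> (k > 1 \<and> n \<le> k + 1 \<longrightarrow> f n {int n - int k} = 2 ^ (n - 1) \<and> f n {int k} = 2 ^ (n - 1))
     \<and> (k > 1 \<and> n > k + 1 \<longrightarrow>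
          int (f n {int n - int k}) = 5 * 2 ^ (n - 3) - 2 ^ (n - k - 2) \<and>
          int (f n {int k}) = 5 * 2 ^ (n - 3) - 2 ^ (k - 2))"
proof -
  have H1: "\<forall>j\<ge>1. (\<lambda>j. int j \<in> {int n - int k}) j \<longleftrightarrow> j = n - k" by auto
  have H2: "\<forall>j\<ge>1. (\<lambda>j. int j \<in> {int k}) j \<longleftrightarrow> j = k" by auto
  note A1 = F_val(1)[OF H1 assms(1), folded f_V]
  note A2 = F_val(2)[OF H1 assms(1), folded f_V]
  note B1 = F_val(1)[OF H2 assms(1), folded f_V]
  note B2 = F_val(2)[OF H2 assms(1), folded f_V]
  show ?thesis
  proof (intro conjI impI)
    assume "k = 1" then show "f n {int n - int k} = 2 ^ (n - 1)" using A1 assms(1) by simp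
  next
    assume "k = 1" then show "f n {int k} = 2 ^ (n - 1)" using B1 by simp
  next
    assume "1 < k \<and> n \<le> k + 1" then have "n - k \<le> 1" by arith
    then show "f n {int n - int k} = 2 ^ (n - 1)" using A1 by blast
  next
    assume "1 < k \<and> n \<le> k + 1" then show "f n {int k} = 2 ^ (n - 1)" using B1 by simp
  next
    assume a: "1 < k \<and> k + 1 < n"
    have "n - k - 2 = n - k - 2" by simp
    show "int (f n {int n - int k}) = 5 * 2 ^ (n - 3) - 2 ^ (n - k - 2)"
      by (rule A2) (use a in arith)+
  next
    assume a: "1 < k \<and> k + 1 < n"
    show "int (f n {int k}) = 5 * 2 ^ (n - 3) - 2 ^ (k - 2)"
      by (rule B2) (use a in arith)+
  qed
qed

end
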